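(* Let $\phi:M_D(\mathbb{C})\to M_D(\mathbb{C})$ be a primitive Schwarz map. Then $\phi$ has spectral radius $1$ if and only if $\phi$ is unital, i.e. $\phi(I)=I$.
   Context: $M_D(\mathbb{C})$ is the algebra of complex $D\times D$ matrices. A linear map $\phi$ on $M_D(\mathbb{C})$ is a Schwarz map if $\phi(a^*a)\ge\phi(a)^*\phi(a)$ for all $a$ (in the Loewner order); unitality is not part of this definition. $\phi$ is primitive if there is $n\in\mathbb{N}$ such that $\phi^n$ maps every nonzero positive semidefinite matrix to a positive definite matrix. The spectral radius is that of $\phi$ as a linear operator on the vector space $M_D(\mathbb{C})$. *)

theory Defs
  imports "Jordan_Normal_Form.Schur_Decomposition"
begin

text \<open>A map phi on M_D(C) is a function complex mat => complex mat mapping the carrier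
  into itself; linearity is required on the carrier.\<close>

definition linear_on_Mat :: "nat \<Rightarrow> (complex mat \<Rightarrow> complex mat) \<Rightarrow> bool" where
  "linear_on_Mat D \<phi> \<longleftrightarrow>
     (\<forall>A \<in> carrier_mat D D. \<phi> A \<in> carrier_mat D D) \<and>
     (\<forall>A \<in> carrier_mat D D. \<forall>B \<in> carrier_mat D D. \<phi> (A + B) = \<phi> A + \<phi> B) \<and>
     (\<forall>c. \<forall>A \<in> carrier_mat D D. \<phi> (c \<cdot>\<^sub>m A) = c \<cdot>\<^sub>m \<phi> A)"

definition psd_mat :: "nat \<Rightarrow> complex mat \<Rightarrow> bool" where
  "psd_mat D A \<longleftrightarrow> A \<in> carrier_mat D D \<and> mat_adjoint A = A \<and>
     (\<forall>v \<in> carrier_vec D. Re (conjugate v \<bullet> (A *\<^sub>v v)) \<ge> 0)"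

definition pd_mat :: "nat \<Rightarrow> complex mat \<Rightarrow> bool" where
  "pd_mat D A \<longleftrightarrow> A \<in> carrier_mat D D \<and> mat_adjoint A = A \<and>
     (\<forall>v \<in> carrier_vec D. v \<noteq> 0\<^sub>v D \<longrightarrow> Re (conjugate v \<bullet> (A *\<^sub>v v)) > 0)"

definition loewner_ge :: "nat \<Rightarrow> complex mat \<Rightarrow> complex mat \<Rightarrow> bool" where
  "loewner_ge D A B \<longleftrightarrow> psd_mat D (A - B)"

definition schwarz_map :: "nat \<Rightarrow> (complex mat \<Rightarrow> complex mat) \<Rightarrow> bool" where
  "schwarz_map D \<phi> \<longleftrightarrow> linear_on_Mat D \<phi> \<and>
     (\<forall>a \<in> carrier_mat D D.
        loewner_ge D (\<phi> (mat_adjoint a * a)) (mat_adjoint (\<phi> a) * \<phi> a))"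

definition primitive_map :: "nat \<Rightarrow> (complex mat \<Rightarrow> complex mat) \<Rightarrow> bool" where
  "primitive_map D \<phi> \<longleftrightarrow>
     (\<exists>n::nat. \<forall>A. psd_mat D A \<and> A \<noteq> 0\<^sub>m D D \<longrightarrow> pd_mat D ((\<phi> ^^ n) A))"

text \<open>Eigenvalues of phi as a linear operator on the vector space M_D(C), and its
  spectral radius (finite-dimensional, so spectrum = set of eigenvalues).\<close>
definition map_eigenvalue :: "nat \<Rightarrow> (complex mat \<Rightarrow> complex mat) \<Rightarrow> complex \<Rightarrow> bool" where
  "map_eigenvalue D \<phi> l \<longleftrightarrow>
     (\<exists>X \<in> carrier_mat D D. X \<noteq> 0\<^sub>m D D \<and> \<phi> X = l \<cdot>\<^sub>m X)"

definition map_spectral_radius :: "nat \<Rightarrow> (complex mat \<Rightarrow> complex mat) \<Rightarrow> real" where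
  "map_spectral_radius D \<phi> = Sup {cmod l | l. map_eigenvalue D \<phi> l}"

end

theory Submission
  imports Defs "Jordan_Normal_Form.Spectral_Radius"
begin


definition F :: "nat \<Rightarrow> complex mat \<Rightarrow> (nat \<Rightarrow> complex) \<Rightarrow> (nat \<Rightarrow> complex) \<Rightarrow> complex" where
  "F D A x y = (\<Sum>i<D. \<Sum>j<D. cnj (x i) * A $$ (i,j) * y j)"

definition N :: "nat \<Rightarrow> (nat \<Rightarrow> complex) \<Rightarrow> real" where
  "N D x = (\<Sum>i<D. (cmod (x i))^2)"

definition T :: "nat \<Rightarrow> complex mat \<Rightarrow> real" where
  "T D A = (\<Sum>i<D. \<Sum>j<D. cmod (A $$ (i,j)))"

definition herm :: "nat \<Rightarrow> complex mat \<Rightarrow> bool" where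
  "herm D A \<longleftrightarrow> (\<forall>i<D. \<forall>j<D. A $$ (j,i) = cnj (A $$ (i,j)))"

lemma adj_carrier[simp]: "A \<in> carrier_mat n m \<Longrightarrow> mat_adjoint A \<in> carrier_mat m n"
  unfolding mat_adjoint_def by auto

lemma adj_dims[simp]: "dim_row (mat_adjoint A) = dim_col A" "dim_col (mat_adjoint A) = dim_row A"
  unfolding mat_adjoint_def by auto

lemma adj_index[simp]: "i < dim_col A \<Longrightarrow> j < dim_row A \<Longrightarrow> mat_adjoint A $$ (i,j) = cnj (A $$ (j,i))"
  unfolding mat_adjoint_def by (simp add: mat_of_rows_index conjugate_complex_def)

lemma herm_iff: assumes A: "A \<in> carrier_mat D D" shows "mat_adjoint A = A \<longleftrightarrow> herm D A"
  unfolding herm_def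
proof
  assume "mat_adjoint A = A"
  thus "\<forall>i<D. \<forall>j<D. A $$ (j, i) = cnj (A $$ (i, j))"
    by (metis A adj_index carrier_matD(1) carrier_matD(2))
next
  assume a: "\<forall>i<D. \<forall>j<D. A $$ (j, i) = cnj (A $$ (i, j))"
  show "mat_adjoint A = A"
  proof (rule eq_matI)
    fix i j assume "i < dim_row A" "j < dim_col A"
    thus "mat_adjoint A $$ (i, j) = A $$ (i, j)" using A a[rule_format, of i j] by simp
  qed (use A in auto)
qed

lemma F_cong: "(\<And>i. i < D \<Longrightarrow> x i = x' i) \<Longrightarrow> (\<And>i. i < D \<Longrightarrow> y i = y' i) \<Longrightarrow> F D A x y = F D A x' y'"
  unfolding F_def by (intro sum.cong refl) auto

lemma F_vec: assumes "A \<in> carrier_mat D D" "v \<in> carrier_vec D"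
  shows "conjugate v \<bullet> (A *\<^sub>v v) = F D A (($) v) (($) v)"
  using assms unfolding F_def scalar_prod_def
  by (auto simp: conjugate_complex_def row_def scalar_prod_def sum_distrib_left mult.assoc intro!: sum.cong)

lemma psd_iff: "psd_mat D A \<longleftrightarrow> A \<in> carrier_mat D D \<and> herm D A \<and> (\<forall>x. 0 \<le> Re (F D A x x))"
proof
  assume a: "psd_mat D A"
  hence A: "A \<in> carrier_mat D D" and h: "herm D A" using herm_iff unfolding psd_mat_def by auto
  have "0 \<le> Re (F D A x x)" for x
  proof -
    have "F D A x x = F D A (($) (vec D x)) (($) (vec D x))" by (rule F_cong) auto
    also have "\<dots> = conjugate (vec D x) \<bullet> (A *\<^sub>v vec D x)" using F_vec[OF A, of "vec D x"] by simp
    finally show ?thesis using a unfolding psd_mat_def by auto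
  qed
  thus "A \<in> carrier_mat D D \<and> herm D A \<and> (\<forall>x. 0 \<le> Re (F D A x x))" using A h by auto
next
  assume "A \<in> carrier_mat D D \<and> herm D A \<and> (\<forall>x. 0 \<le> Re (F D A x x))"
  thus "psd_mat D A" unfolding psd_mat_def using herm_iff F_vec by auto
qed

lemma psdI: "A \<in> carrier_mat D D \<Longrightarrow> herm D A \<Longrightarrow> (\<And>x. 0 \<le> Re (F D A x x)) \<Longrightarrow> psd_mat D A"
  using psd_iff by auto

lemma N_nonneg: "0 \<le> N D x" unfolding N_def by (auto intro: sum_nonneg)

lemma pd_F: assumes "pd_mat D A" "0 < N D x" shows "0 < Re (F D A x x)"
proof -
  have A: "A \<in> carrier_mat D D" using assms unfolding pd_mat_def by auto
  have "\<exists>i. i < D \<and> x i \<noteq> 0"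
  proof (rule ccontr)
    assume "\<not> (\<exists>i. i < D \<and> x i \<noteq> 0)"
    hence "N D x = 0" unfolding N_def by auto
    thus False using assms(2) by simp
  qed
  then obtain i where i: "i < D" "x i \<noteq> 0" by blast
  have "vec D x \<noteq> 0\<^sub>v D" using i by (metis index_vec index_zero_vec(1))
  hence "0 < Re (conjugate (vec D x) \<bullet> (A *\<^sub>v vec D x))" using assms(1) unfolding pd_mat_def by auto
  also have "conjugate (vec D x) \<bullet> (A *\<^sub>v vec D x) = F D A (($) (vec D x)) (($) (vec D x))"
    using F_vec[OF A] by simp
  also have "\<dots> = F D A x x" by (rule F_cong) auto
  finally show ?thesis .
qed



lemma cnj_sq: "cnj z * z = of_real ((cmod z)^2)" for z :: complex
  using complex_norm_square[of z] by (simp add: mult.commute)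

lemma F_add: "A \<in> carrier_mat D D \<Longrightarrow> B \<in> carrier_mat D D \<Longrightarrow> F D (A + B) x y = F D A x y + F D B x y"
  unfolding F_def by (simp add: algebra_simps sum.distrib)

lemma F_minus: "A \<in> carrier_mat D D \<Longrightarrow> B \<in> carrier_mat D D \<Longrightarrow> F D (A - B) x y = F D A x y - F D B x y"
  unfolding F_def by (simp add: algebra_simps sum_subtractf)

lemma F_smult: "A \<in> carrier_mat D D \<Longrightarrow> F D (c \<cdot>\<^sub>m A) x y = c * F D A x y"
  unfolding F_def by (simp add: algebra_simps sum_distrib_left)

lemma F_zero: "F D (0\<^sub>m D D) x y = 0"
  unfolding F_def by simp

lemma F_one: "F D (1\<^sub>m D) x x = of_real (N D x)"
proof -
  have "F D (1\<^sub>m D) x x = (\<Sum>i<D. cnj (x i) * x i)"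
    unfolding F_def by (simp add: if_distrib[of "\<lambda>t. _ * t * _"] cong: if_cong)
  also have "\<dots> = (\<Sum>i<D. of_real ((cmod (x i))^2))"
    by (intro sum.cong refl) (simp add: cnj_sq)
  finally show ?thesis unfolding N_def by simp
qed

lemma F_herm_sym: assumes "herm D A" shows "F D A y x = cnj (F D A x y)"
proof -
  have "cnj (F D A x y) = (\<Sum>i<D. \<Sum>j<D. x i * cnj (A $$ (i,j)) * cnj (y j))"
    unfolding F_def by simp
  also have "\<dots> = (\<Sum>i<D. \<Sum>j<D. x i * A $$ (j,i) * cnj (y j))"
    by (intro sum.cong refl) (simp add: assms[unfolded herm_def, rule_format, symmetric])
  also have "\<dots> = (\<Sum>j<D. \<Sum>i<D. x i * A $$ (j,i) * cnj (y j))"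
    by (rule sum.swap)
  also have "\<dots> = F D A y x" unfolding F_def by (intro sum.cong refl) (simp add: algebra_simps)
  finally show ?thesis by simp
qed

lemma F_real: assumes "herm D A" shows "F D A x x = of_real (Re (F D A x x))"
proof -
  have "F D A x x = cnj (F D A x x)" by (rule F_herm_sym[OF assms])
  hence "Im (F D A x x) = 0" by (metis Reals_cnj_iff complex_is_Real_iff)
  thus ?thesis by (simp add: complex_eq_iff)
qed

lemma F_expand: "F D A (\<lambda>i. x i + s * w i) (\<lambda>i. x i + s * w i)
   = F D A x x + s * F D A x w + cnj s * F D A w x + cnj s * s * F D A w w"
  unfolding F_def by (simp add: algebra_simps sum.distrib sum_distrib_left)

lemma CS: assumes psd: "psd_mat D A" and pos: "0 < Re (F D A w w)"
  shows "(cmod (F D A w x))^2 \<le> Re (F D A w w) * Re (F D A x x)"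
proof -
  have h: "herm D A" using psd psd_iff by auto
  define B where "B = Re (F D A w w)"
  define g where "g = F D A w x"
  have Fww: "F D A w w = of_real B" unfolding B_def using F_real[OF h] by simp
  have Fxw: "F D A x w = cnj g" unfolding g_def by (rule F_herm_sym[OF h])
  define s where "s = - g / of_real B"
  have Bne: "B \<noteq> 0" using pos B_def by simp
  have e1: "s * cnj g = - of_real ((cmod g)^2 / B)" unfolding s_def
    using cnj_sq[of g] by (simp add: mult.commute)
  have e2: "cnj s * g = - of_real ((cmod g)^2 / B)" unfolding s_def
    using cnj_sq[of g] by simp
  have e3: "cnj s * s * of_real B = of_real ((cmod g)^2 / B)" unfolding s_def
    using cnj_sq[of g] Bne by (simp add: field_simps power2_eq_square)
  have "0 \<le> Re (F D A (\<lambda>i. x i + s * w i) (\<lambda>i. x i + s * w i))" using psd psd_iff by auto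
  also have "F D A (\<lambda>i. x i + s * w i) (\<lambda>i. x i + s * w i) = F D A x x - of_real ((cmod g)^2 / B)"
    unfolding F_expand Fww Fxw g_def[symmetric] e1 e2 e3 by simp
  finally have "(cmod g)^2 / B \<le> Re (F D A x x)" by simp
  thus ?thesis using pos unfolding B_def g_def by (simp add: field_simps)
qed

lemma bound: "cmod (F D A x x) \<le> T D A * N D x"
proof -
  have xx: "cmod (x i) * cmod (x j) \<le> N D x" if "i < D" "j < D" for i j
  proof -
    have 1: "(cmod (x i))^2 \<le> N D x" unfolding N_def
      by (rule member_le_sum[where f = "\<lambda>i. (cmod (x i))^2"]) (use that in auto)
    have 2: "(cmod (x j))^2 \<le> N D x" unfolding N_def
      by (rule member_le_sum[where f = "\<lambda>i. (cmod (x i))^2"]) (use that in auto)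
    have 3: "0 \<le> (cmod (x i) - cmod (x j))^2" by simp
    have "2 * (cmod (x i) * cmod (x j)) \<le> (cmod (x i))^2 + (cmod (x j))^2"
      using 3 unfolding power2_diff by linarith
    thus ?thesis using 1 2 by linarith
  qed
  have "cmod (F D A x x) \<le> (\<Sum>i<D. cmod (\<Sum>j<D. cnj (x i) * A $$ (i,j) * x j))"
    unfolding F_def by (rule norm_sum)
  also have "\<dots> \<le> (\<Sum>i<D. \<Sum>j<D. cmod (cnj (x i) * A $$ (i,j) * x j))"
    by (intro sum_mono norm_sum)
  also have "\<dots> \<le> (\<Sum>i<D. \<Sum>j<D. cmod (A $$ (i,j)) * N D x)"
  proof (intro sum_mono)
    fix i j assume "i \<in> {..<D}" "j \<in> {..<D}"
    hence "cmod (A $$ (i,j)) * (cmod (x i) * cmod (x j)) \<le> cmod (A $$ (i,j)) * N D x"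
      using xx by (intro mult_left_mono) auto
    thus "cmod (cnj (x i) * A $$ (i,j) * x j) \<le> cmod (A $$ (i,j)) * N D x"
      by (simp add: norm_mult algebra_simps)
  qed
  also have "\<dots> = T D A * N D x" unfolding T_def by (simp add: sum_distrib_right)
  finally show ?thesis .
qed

definition mv :: "nat \<Rightarrow> complex mat \<Rightarrow> (nat \<Rightarrow> complex) \<Rightarrow> nat \<Rightarrow> complex" where
  "mv D A x = (\<lambda>i. \<Sum>j<D. A $$ (i,j) * x j)"

lemma F_mv: "F D A x y = (\<Sum>i<D. cnj (x i) * mv D A y i)"
  unfolding F_def mv_def by (simp add: sum_distrib_left mult.assoc)

lemma mv_mult: assumes "A \<in> carrier_mat D D" "B \<in> carrier_mat D D" "i < D"
  shows "mv D A (mv D B x) i = mv D (A * B) x i"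
proof -
  have "mv D A (mv D B x) i = (\<Sum>j<D. \<Sum>k<D. A $$ (i,j) * B $$ (j,k) * x k)"
    unfolding mv_def by (simp add: sum_distrib_left mult.assoc)
  also have "\<dots> = (\<Sum>k<D. \<Sum>j<D. A $$ (i,j) * B $$ (j,k) * x k)" by (rule sum.swap)
  also have "\<dots> = mv D (A * B) x i"
    unfolding mv_def using assms
    by (auto simp: scalar_prod_def sum_distrib_right lessThan_atLeast0 intro!: sum.cong)
  finally show ?thesis .
qed

lemma mv_one: "i < D \<Longrightarrow> mv D (1\<^sub>m D) x i = x i"
  unfolding mv_def by (simp add: if_distrib[of "\<lambda>t. t * _"] cong: if_cong)

lemma F_adj_mult: assumes a: "a \<in> carrier_mat D D"
  shows "F D (mat_adjoint a * a) x x = of_real (N D (mv D a x))"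
proof -
  have "F D (mat_adjoint a * a) x x = (\<Sum>i<D. \<Sum>j<D. \<Sum>k<D. cnj (x i) * cnj (a $$ (k,i)) * a $$ (k,j) * x j)"
    unfolding F_def using a
    by (auto simp: scalar_prod_def sum_distrib_left sum_distrib_right lessThan_atLeast0 algebra_simps intro!: sum.cong)
  also have "\<dots> = (\<Sum>i<D. \<Sum>k<D. \<Sum>j<D. cnj (x i) * cnj (a $$ (k,i)) * a $$ (k,j) * x j)"
    by (intro sum.cong refl sum.swap)
  also have "\<dots> = (\<Sum>k<D. \<Sum>i<D. \<Sum>j<D. cnj (x i) * cnj (a $$ (k,i)) * a $$ (k,j) * x j)"
    by (rule sum.swap)
  also have "\<dots> = (\<Sum>k<D. cnj (mv D a x k) * mv D a x k)"
    unfolding mv_def by (simp add: sum_distrib_left sum_distrib_right algebra_simps)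
  also have "\<dots> = (\<Sum>k<D. of_real ((cmod (mv D a x k))^2))"
    by (intro sum.cong refl) (simp add: cnj_sq)
  finally show ?thesis unfolding N_def by simp
qed



declare minus_carrier_mat[simp]

lemma herm_add: assumes "A \<in> carrier_mat D D" "B \<in> carrier_mat D D" "herm D A" "herm D B" shows "herm D (A + B)"
  unfolding herm_def
proof (intro allI impI)
  fix i j assume ij: "i < D" "j < D"
  have "A $$ (j,i) = cnj (A $$ (i,j))" "B $$ (j,i) = cnj (B $$ (i,j))"
    using assms(3,4) ij unfolding herm_def by blast+
  thus "(A + B) $$ (j, i) = cnj ((A + B) $$ (i, j))" using assms(1,2) ij by simp
qed

lemma herm_minus: assumes "A \<in> carrier_mat D D" "B \<in> carrier_mat D D" "herm D A" "herm D B" shows "herm D (A - B)"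
  unfolding herm_def
proof (intro allI impI)
  fix i j assume ij: "i < D" "j < D"
  have "A $$ (j,i) = cnj (A $$ (i,j))" "B $$ (j,i) = cnj (B $$ (i,j))"
    using assms(3,4) ij unfolding herm_def by blast+
  thus "(A - B) $$ (j, i) = cnj ((A - B) $$ (i, j))" using assms(1,2) ij by simp
qed

lemma herm_smult: assumes "A \<in> carrier_mat D D" "herm D A" shows "herm D (of_real r \<cdot>\<^sub>m A)"
  unfolding herm_def
proof (intro allI impI)
  fix i j assume ij: "i < D" "j < D"
  have "A $$ (j,i) = cnj (A $$ (i,j))"
    using assms(2) ij unfolding herm_def by blast+
  thus "(of_real r \<cdot>\<^sub>m A) $$ (j, i) = cnj ((of_real r \<cdot>\<^sub>m A) $$ (i, j))" using assms(1) ij by simp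
qed

lemma herm_one: "herm D (1\<^sub>m D)"
  unfolding herm_def by simp

lemma herm_zero: "herm D (0\<^sub>m D D)"
  unfolding herm_def by simp

lemma psd_carrier: "psd_mat D A \<Longrightarrow> A \<in> carrier_mat D D"
  unfolding psd_mat_def by simp

lemma psd_herm: "psd_mat D A \<Longrightarrow> herm D A"
  using psd_iff by auto

lemma psd_F: "psd_mat D A \<Longrightarrow> 0 \<le> Re (F D A x x)"
  using psd_iff by auto

lemma psd_add: "psd_mat D A \<Longrightarrow> psd_mat D B \<Longrightarrow> psd_mat D (A + B)"
  using psd_carrier psd_herm psd_F
  by (intro psdI) (auto simp: F_add intro!: herm_add)

lemma psd_smult: "0 \<le> r \<Longrightarrow> psd_mat D A \<Longrightarrow> psd_mat D (of_real r \<cdot>\<^sub>m A)"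
  using psd_carrier psd_herm psd_F
  by (intro psdI) (auto simp: F_smult intro!: herm_smult)

lemma psd_zero: "psd_mat D (0\<^sub>m D D)"
  by (intro psdI) (auto simp: F_zero herm_zero)

lemma psd_one: "psd_mat D (1\<^sub>m D)"
  by (intro psdI) (auto simp: F_one herm_one N_nonneg)

lemma herm_adj_mult: assumes a: "a \<in> carrier_mat D D" shows "herm D (mat_adjoint a * a)"
  unfolding herm_def
proof (intro allI impI)
  fix i j assume ij: "i < D" "j < D"
  have "(mat_adjoint a * a) $$ (j,i) = (\<Sum>k<D. cnj (a $$ (k,j)) * a $$ (k,i))"
    using a ij by (simp add: scalar_prod_def lessThan_atLeast0)
  also have "\<dots> = cnj (\<Sum>k<D. cnj (a $$ (k,i)) * a $$ (k,j))"
    by (simp add: mult.commute)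
  also have "(\<Sum>k<D. cnj (a $$ (k,i)) * a $$ (k,j)) = (mat_adjoint a * a) $$ (i,j)"
    using a ij by (simp add: scalar_prod_def lessThan_atLeast0)
  finally show "(mat_adjoint a * a) $$ (j,i) = cnj ((mat_adjoint a * a) $$ (i,j))" .
qed

lemma psd_adj_mult: assumes a: "a \<in> carrier_mat D D" shows "psd_mat D (mat_adjoint a * a)"
  using a by (intro psdI) (auto simp: F_adj_mult herm_adj_mult N_nonneg)

definition leq :: "nat \<Rightarrow> complex mat \<Rightarrow> complex mat \<Rightarrow> bool" where
  "leq D A B \<longleftrightarrow> A \<in> carrier_mat D D \<and> B \<in> carrier_mat D D \<and> psd_mat D (B - A)"

lemma leq_carrier: "leq D A B \<Longrightarrow> A \<in> carrier_mat D D" "leq D A B \<Longrightarrow> B \<in> carrier_mat D D"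
  unfolding leq_def by auto

lemma leq_F: "leq D A B \<Longrightarrow> Re (F D A x x) \<le> Re (F D B x x)"
  unfolding leq_def using psd_F[of D "B - A" x] by (simp add: F_minus)

lemma leqI: assumes "A \<in> carrier_mat D D" "B \<in> carrier_mat D D" "herm D A" "herm D B"
  "\<And>x. Re (F D A x x) \<le> Re (F D B x x)" shows "leq D A B"
  unfolding leq_def using assms by (auto intro!: psdI herm_minus simp: F_minus)

lemma leq_herm: "leq D A B \<Longrightarrow> herm D A \<Longrightarrow> herm D B"
proof -
  assume l: "leq D A B" and h: "herm D A"
  have e: "B = (B - A) + A" using leq_carrier[OF l] by auto
  have "herm D (B - A)" using l unfolding leq_def by (auto intro: psd_herm)
  have "B - A \<in> carrier_mat D D" using leq_carrier[OF l] by simp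
  hence "herm D ((B - A) + A)" using herm_add[of "B - A" D A] leq_carrier[OF l] h \<open>B - A \<in> carrier_mat D D\<close> \<open>herm D (B - A)\<close> by blast
  thus ?thesis using e by metis
qed

lemma leq_herm': "leq D A B \<Longrightarrow> herm D B \<Longrightarrow> herm D A"
proof -
  assume l: "leq D A B" and h: "herm D B"
  have e: "A = B - (B - A)" using leq_carrier[OF l] by auto
  have "herm D (B - A)" using l unfolding leq_def by (auto intro: psd_herm)
  have "B - A \<in> carrier_mat D D" using leq_carrier[OF l] by simp
  hence "herm D (B - (B - A))" using herm_minus[of B D "B - A"] leq_carrier[OF l] h \<open>B - A \<in> carrier_mat D D\<close> \<open>herm D (B - A)\<close> by blast
  thus ?thesis using e by metis
qed

lemma leq_trans: "leq D A B \<Longrightarrow> leq D B C \<Longrightarrow> leq D A C"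
proof -
  assume 1: "leq D A B" and 2: "leq D B C"
  have "C - A = (C - B) + (B - A)" using leq_carrier[OF 1] leq_carrier[OF 2] by auto
  moreover have "psd_mat D ((C - B) + (B - A))" using 1 2 unfolding leq_def by (auto intro: psd_add)
  ultimately show ?thesis using 1 2 unfolding leq_def by auto
qed

lemma leq_refl: "A \<in> carrier_mat D D \<Longrightarrow> leq D A A"
  unfolding leq_def using psd_zero by (metis minus_r_inv_mat)

lemma leq_add: "leq D A B \<Longrightarrow> leq D C E \<Longrightarrow> leq D (A + C) (B + E)"
proof -
  assume 1: "leq D A B" and 2: "leq D C E"
  have "(B + E) - (A + C) = (B - A) + (E - C)" using leq_carrier[OF 1] leq_carrier[OF 2]
    by (auto intro!: eq_matI)
  moreover have "psd_mat D ((B - A) + (E - C))" using 1 2 unfolding leq_def by (auto intro: psd_add)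
  ultimately show ?thesis using 1 2 unfolding leq_def by auto
qed

lemma leq_smult: "0 \<le> r \<Longrightarrow> leq D A B \<Longrightarrow> leq D (of_real r \<cdot>\<^sub>m A) (of_real r \<cdot>\<^sub>m B)"
proof -
  assume r: "0 \<le> r" and 1: "leq D A B"
  have "(of_real r \<cdot>\<^sub>m B) - (of_real r \<cdot>\<^sub>m A) = of_real r \<cdot>\<^sub>m (B - A)" using leq_carrier[OF 1]
    by (auto intro!: eq_matI simp: algebra_simps)
  moreover have "psd_mat D (of_real r \<cdot>\<^sub>m (B - A))" using 1 r unfolding leq_def by (auto intro: psd_smult)
  ultimately show ?thesis using 1 unfolding leq_def by auto
qed

lemma leq_psd: "psd_mat D A \<Longrightarrow> leq D (0\<^sub>m D D) A"
proof -
  assume a: "psd_mat D A"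
  have "A - 0\<^sub>m D D = A" using psd_carrier[OF a] by (intro eq_matI) auto
  thus ?thesis unfolding leq_def using a psd_carrier[OF a] by auto
qed

lemma herm_bound: assumes "A \<in> carrier_mat D D" "herm D A"
  shows "leq D A (of_real (T D A) \<cdot>\<^sub>m 1\<^sub>m D)"
proof (rule leqI)
  fix x
  have "Re (F D A x x) \<le> cmod (F D A x x)" by (rule complex_Re_le_cmod)
  also have "\<dots> \<le> T D A * N D x" by (rule bound)
  finally show "Re (F D A x x) \<le> Re (F D (of_real (T D A) \<cdot>\<^sub>m 1\<^sub>m D) x x)"
    by (simp add: F_smult F_one)
qed (use assms in \<open>auto intro: herm_smult herm_one\<close>)

lemma pd_psd: assumes "pd_mat D A" shows "psd_mat D A"
  unfolding psd_mat_def
proof (intro conjI ballI)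
  show "A \<in> carrier_mat D D" "mat_adjoint A = A" using assms unfolding pd_mat_def by auto
  fix v :: "complex vec" assume v: "v \<in> carrier_vec D"
  show "0 \<le> Re (conjugate v \<bullet> (A *\<^sub>v v))"
  proof (cases "v = 0\<^sub>v D")
    case True
    have "A *\<^sub>v v = 0\<^sub>v D" using True \<open>A \<in> carrier_mat D D\<close> by auto
    thus ?thesis using v by simp
  next
    case False
    thus ?thesis using assms v unfolding pd_mat_def by (auto intro: less_imp_le)
  qed
qed



lemma pd_eps: assumes pd: "pd_mat D Q"
  shows "\<exists>e>0. leq D (of_real e \<cdot>\<^sub>m 1\<^sub>m D) Q"
proof -
  have Q: "Q \<in> carrier_mat D D" using pd unfolding pd_mat_def by auto
  have psdQ: "psd_mat D Q" using pd_psd[OF pd] .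
  have hQ: "herm D Q" using psd_herm[OF psdQ] .
  have "det Q \<noteq> 0"
  proof
    assume "det Q = 0"
    then obtain v where v: "v \<in> carrier_vec D" "v \<noteq> 0\<^sub>v D" "Q *\<^sub>v v = 0\<^sub>v D"
      using det_0_iff_vec_prod_zero[OF Q] by auto
    have "0 < Re (conjugate v \<bullet> (Q *\<^sub>v v))" using pd v unfolding pd_mat_def by auto
    thus False using v by simp
  qed
  hence "Q \<in> Units (ring_mat TYPE(complex) D D)" using det_non_zero_imp_unit[OF Q] by auto
  hence "mat_inverse Q \<noteq> None" using mat_inverse(1)[OF Q, of D] by blast
  then obtain B where "mat_inverse Q = Some B" by auto
  hence QB: "Q * B = 1\<^sub>m D" and B: "B \<in> carrier_mat D D" using mat_inverse(2)[OF Q] by auto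
  define e where "e = 1 / (T D B + 1)"
  have TB: "0 \<le> T D B" unfolding T_def by (auto intro!: sum_nonneg)
  have e: "0 < e" unfolding e_def using TB by auto
  have main: "e * N D x \<le> Re (F D Q x x)" for x
  proof (cases "N D x = 0")
    case True thus ?thesis using psd_F[OF psdQ] by simp
  next
    case False
    hence Nx: "0 < N D x" using N_nonneg[of D x] by auto
    define w where "w = mv D B x"
    have Qw: "mv D Q w i = x i" if "i < D" for i
      unfolding w_def using mv_mult[OF Q B that] QB mv_one[OF that] by simp
    have Fxw: "F D Q x w = of_real (N D x)"
    proof -
      have "F D Q x w = (\<Sum>i<D. cnj (x i) * x i)" unfolding F_mv using Qw by simp
      also have "\<dots> = (\<Sum>i<D. of_real ((cmod (x i))^2))" by (simp add: cnj_sq)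
      finally show ?thesis unfolding N_def by simp
    qed
    have Fww: "F D Q w w = cnj (F D B x x)"
    proof -
      have "F D Q w w = (\<Sum>i<D. cnj (w i) * x i)" unfolding F_mv using Qw by simp
      also have "\<dots> = cnj (\<Sum>i<D. cnj (x i) * w i)" by (simp add: mult.commute)
      also have "(\<Sum>i<D. cnj (x i) * w i) = F D B x x" unfolding F_mv w_def by simp
      finally show ?thesis .
    qed
    have "0 < N D w"
    proof (rule ccontr)
      assume "\<not> 0 < N D w"
      hence "N D w = 0" using N_nonneg[of D w] by auto
      hence "\<forall>i<D. (cmod (w i))^2 = 0" unfolding N_def
        by (subst (asm) sum_nonneg_eq_0_iff) auto
      hence w0: "\<forall>i<D. w i = 0" by auto
      have "\<forall>i<D. x i = 0"
      proof (intro allI impI)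
        fix i assume i: "i < D"
        have "x i = mv D Q w i" using Qw[OF i] by simp
        also have "\<dots> = 0" unfolding mv_def using w0 by simp
        finally show "x i = 0" .
      qed
      hence "N D x = 0" unfolding N_def by simp
      thus False using Nx by simp
    qed
    hence pos: "0 < Re (F D Q w w)" using pd_F[OF pd] by auto
    have Fwx: "F D Q w x = of_real (N D x)"
      using F_herm_sym[OF hQ, of w x] Fxw by simp
    have "(N D x)^2 \<le> Re (F D Q w w) * Re (F D Q x x)"
      using CS[OF psdQ pos, of x] Fwx by simp
    also have "Re (F D Q w w) \<le> T D B * N D x"
      using Fww complex_Re_le_cmod[of "F D B x x"] bound[of D B x] by simp
    hence "Re (F D Q w w) * Re (F D Q x x) \<le> (T D B * N D x) * Re (F D Q x x)"
      using psd_F[OF psdQ, of x] by (rule mult_right_mono)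
    finally have "N D x * N D x \<le> N D x * (T D B * Re (F D Q x x))"
      by (simp add: power2_eq_square algebra_simps)
    hence "N D x \<le> T D B * Re (F D Q x x)" using Nx by simp
    also have "\<dots> \<le> (T D B + 1) * Re (F D Q x x)"
      using psd_F[OF psdQ, of x] by (simp add: algebra_simps)
    finally show ?thesis unfolding e_def using TB by (simp add: field_simps)
  qed
  have "leq D (of_real e \<cdot>\<^sub>m 1\<^sub>m D) Q"
  proof (rule leqI)
    fix x show "Re (F D (of_real e \<cdot>\<^sub>m 1\<^sub>m D) x x) \<le> Re (F D Q x x)"
      using main[of x] by (simp add: F_smult F_one)
  qed (use Q hQ in \<open>auto intro: herm_smult herm_one\<close>)
  thus ?thesis using e by auto
qed

lemma e_vec_F: "j < D \<Longrightarrow> F D A (\<lambda>i. if i = j then 1 else 0) (\<lambda>i. if i = j then 1 else 0) = A $$ (j,j)"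
  unfolding F_def by (simp add: if_distrib[of cnj] if_distrib[of "\<lambda>t. t * _"] if_distrib[of "\<lambda>t. _ * t"] cong: if_cong)

lemma e_vec_F2: "j < D \<Longrightarrow> i < D \<Longrightarrow> F D A (\<lambda>k. if k = i then 1 else 0) (\<lambda>k. if k = j then 1 else 0) = A $$ (i,j)"
  unfolding F_def by (simp add: if_distrib[of cnj] if_distrib[of "\<lambda>t. t * _"] if_distrib[of "\<lambda>t. _ * t"] cong: if_cong)



lemma diag_pos: assumes psd: "psd_mat D A" and ij: "i < D" "j < D" and nz: "A $$ (i,j) \<noteq> 0"
  shows "0 < Re (A $$ (j,j))"
proof (rule ccontr)
  assume "\<not> 0 < Re (A $$ (j,j))"
  moreover have "0 \<le> Re (A $$ (j,j))" using psd_F[OF psd, of "\<lambda>k. if k = j then 1 else 0"] e_vec_F[OF ij(2)] by simp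
  ultimately have re0: "Re (A $$ (j,j)) = 0" by simp
  have h: "herm D A" using psd_herm[OF psd] .
  have "A $$ (j,j) = cnj (A $$ (j,j))" using h ij unfolding herm_def by blast
  hence "Im (A $$ (j,j)) = 0" by (metis Reals_cnj_iff complex_is_Real_iff)
  hence Ajj: "A $$ (j,j) = 0" using re0 by (simp add: complex_eq_iff)
  have Aji: "A $$ (j,i) = cnj (A $$ (i,j))" using h ij unfolding herm_def by blast
  define x where "x = (\<lambda>k. if k = i then 1 else (0::complex))"
  define w where "w = (\<lambda>k. if k = j then 1 else (0::complex))"
  define a where "a = A $$ (i,j)"
  define t where "t = (Re (A $$ (i,i)) + 1) / (2 * (cmod a)^2)"
  have ca: "0 < (cmod a)^2" using nz a_def by simp
  define s where "s = - of_real t * cnj a"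
  have Fxx: "F D A x x = A $$ (i,i)" unfolding x_def using e_vec_F[OF ij(1)] .
  have Fxw: "F D A x w = a" unfolding x_def w_def a_def using e_vec_F2[OF ij(2) ij(1)] .
  have Fwx: "F D A w x = cnj a" unfolding x_def w_def a_def using e_vec_F2[OF ij(1) ij(2)] Aji by simp
  have Fww: "F D A w w = 0" unfolding w_def using e_vec_F[OF ij(2)] Ajj by simp
  have "0 \<le> Re (F D A (\<lambda>k. x k + s * w k) (\<lambda>k. x k + s * w k))" using psd_F[OF psd] .
  also have "Re (F D A (\<lambda>k. x k + s * w k) (\<lambda>k. x k + s * w k)) = Re (A $$ (i,i)) - 2 * t * (cmod a)^2"
    unfolding F_expand Fxx Fxw Fwx Fww s_def
    using cmod_power2[of a] by (simp add: algebra_simps power2_eq_square)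
  also have "\<dots> = -1" unfolding t_def using ca by (simp add: field_simps)
  finally show False by simp
qed

lemma psd_leq: "leq D X Y \<Longrightarrow> psd_mat D X \<Longrightarrow> psd_mat D Y"
proof -
  assume l: "leq D X Y" and p: "psd_mat D X"
  have "leq D (0\<^sub>m D D) Y" using leq_trans[OF leq_psd[OF p] l] .
  moreover have "Y - 0\<^sub>m D D = Y" using leq_carrier(2)[OF l] by (intro eq_matI) auto
  ultimately show ?thesis unfolding leq_def by metis
qed

lemma schwarz_closed: "schwarz_map D \<phi> \<Longrightarrow> A \<in> carrier_mat D D \<Longrightarrow> \<phi> A \<in> carrier_mat D D"
  unfolding schwarz_map_def linear_on_Mat_def by blast

lemma schwarz_add: "schwarz_map D \<phi> \<Longrightarrow> A \<in> carrier_mat D D \<Longrightarrow> B \<in> carrier_mat D D \<Longrightarrow> \<phi> (A + B) = \<phi> A + \<phi> B"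
  unfolding schwarz_map_def linear_on_Mat_def by blast

lemma schwarz_smult: "schwarz_map D \<phi> \<Longrightarrow> A \<in> carrier_mat D D \<Longrightarrow> \<phi> (c \<cdot>\<^sub>m A) = c \<cdot>\<^sub>m \<phi> A"
  unfolding schwarz_map_def linear_on_Mat_def by blast

lemma schwarz_minus: assumes s: "schwarz_map D \<phi>" and A: "A \<in> carrier_mat D D" and B: "B \<in> carrier_mat D D"
  shows "\<phi> (A - B) = \<phi> A - \<phi> B"
proof -
  have "A - B = A + (-1) \<cdot>\<^sub>m B" using A B by (intro eq_matI) auto
  hence "\<phi> (A - B) = \<phi> A + (-1) \<cdot>\<^sub>m \<phi> B" using schwarz_add[OF s A] schwarz_smult[OF s B] B by simp
  also have "\<dots> = \<phi> A - \<phi> B" using schwarz_closed[OF s A] schwarz_closed[OF s B] by (intro eq_matI) auto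
  finally show ?thesis .
qed

lemma schwarz_zero: assumes s: "schwarz_map D \<phi>" shows "\<phi> (0\<^sub>m D D) = 0\<^sub>m D D"
proof -
  have e: "0\<^sub>m D D - 0\<^sub>m D D = (0\<^sub>m D D :: complex mat)" by (intro eq_matI) auto
  have "\<phi> (0\<^sub>m D D) = \<phi> (0\<^sub>m D D - 0\<^sub>m D D)" by (metis e)
  also have "\<dots> = \<phi> (0\<^sub>m D D) - \<phi> (0\<^sub>m D D)" using schwarz_minus[OF s] by simp
  also have "\<dots> = 0\<^sub>m D D" using schwarz_closed[OF s, of "0\<^sub>m D D"] by (intro eq_matI) auto
  finally show ?thesis .
qed

lemma schwarz_ineq: "schwarz_map D \<phi> \<Longrightarrow> a \<in> carrier_mat D D \<Longrightarrow>
   leq D (mat_adjoint (\<phi> a) * \<phi> a) (\<phi> (mat_adjoint a * a))"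
proof -
  assume s: "schwarz_map D \<phi>" and a: "a \<in> carrier_mat D D"
  have aa: "mat_adjoint a * a \<in> carrier_mat D D" using a by (metis adj_carrier mult_carrier_mat)
  have pa: "\<phi> a \<in> carrier_mat D D" using schwarz_closed[OF s a] .
  have "mat_adjoint (\<phi> a) * \<phi> a \<in> carrier_mat D D" using pa by (metis adj_carrier mult_carrier_mat)
  thus ?thesis unfolding leq_def using schwarz_closed[OF s aa] s a
    unfolding schwarz_map_def loewner_ge_def by blast
qed

lemma pos_rank1: assumes s: "schwarz_map D \<phi>" and j: "j < D"
  shows "psd_mat D (\<phi> (mat D D (\<lambda>(k,l). c k * cnj (c l))))"
proof -
  define b where "b = mat D D (\<lambda>(r,l). if r = 0 then cnj (c l) else 0)"
  have b: "b \<in> carrier_mat D D" unfolding b_def by simp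
  have D0: "0 < D" using j by simp
  have "mat_adjoint b * b = mat D D (\<lambda>(k,l). c k * cnj (c l))"
  proof (rule eq_matI)
    fix k l assume kl: "k < dim_row (mat D D (\<lambda>(k,l). c k * cnj (c l)))" "l < dim_col (mat D D (\<lambda>(k,l). c k * cnj (c l)))"
    hence "(mat_adjoint b * b) $$ (k,l) = (\<Sum>r\<in>{0..<D}. cnj (b $$ (r,k)) * b $$ (r,l))"
      using b by (simp add: scalar_prod_def)
    also have "\<dots> = (\<Sum>r\<in>{0..<D}. if r = 0 then c k * cnj (c l) else 0)"
      using kl unfolding b_def by (intro sum.cong refl) auto
    also have "\<dots> = c k * cnj (c l)" using D0 by simp
    finally show "(mat_adjoint b * b) $$ (k,l) = mat D D (\<lambda>(k,l). c k * cnj (c l)) $$ (k,l)"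
      using kl by simp
  qed (use b in auto)
  moreover have "psd_mat D (\<phi> (mat_adjoint b * b))"
    using psd_leq[OF schwarz_ineq[OF s b] psd_adj_mult[OF schwarz_closed[OF s b]]] .
  ultimately show ?thesis by simp
qed



definition ncols :: "nat \<Rightarrow> complex mat \<Rightarrow> nat set" where
  "ncols D A = {j. j < D \<and> (\<exists>i<D. A $$ (i,j) \<noteq> 0)}"

lemma sum_if_eq: fixes D :: nat assumes "j < D" shows "(\<Sum>i<D. \<Sum>k<D. if i = j then f k else 0) = (\<Sum>k<D. f k)"
proof -
  have "(\<Sum>i<D. \<Sum>k<D. if i = j then f k else 0) = (\<Sum>i<D. if i = j then (\<Sum>k<D. f k) else 0)"
    by (intro sum.cong refl) auto
  also have "\<dots> = (\<Sum>k<D. f k)" using sum.delta[of "{..<D}" j "\<lambda>_. sum f {..<D}"] assms by simp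
  finally show ?thesis .
qed

lemma positive: assumes s: "schwarz_map D \<phi>" and psd: "psd_mat D A"
  shows "psd_mat D (\<phi> A)"
proof -
  have "\<forall>A. card (ncols D A) = n \<longrightarrow> psd_mat D A \<longrightarrow> psd_mat D (\<phi> A)" for n
  proof (induction n rule: less_induct)
    case (less n)
    show ?case
    proof (intro allI impI)
      fix A assume cn: "card (ncols D A) = n" and psd: "psd_mat D A"
      have A: "A \<in> carrier_mat D D" using psd_carrier[OF psd] .
      have h: "herm D A" using psd_herm[OF psd] .
      show "psd_mat D (\<phi> A)"
      proof (cases "ncols D A = {}")
        case True
        have "A = 0\<^sub>m D D"
        proof (rule eq_matI)
          fix i j assume "i < dim_row (0\<^sub>m D D)" "j < dim_col (0\<^sub>m D D)"
          thus "A $$ (i,j) = 0\<^sub>m D D $$ (i,j)" using True unfolding ncols_def by auto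
        qed (use A in auto)
        thus ?thesis using schwarz_zero[OF s] psd_zero by simp
      next
        case False
        then obtain j where j: "j \<in> ncols D A" by auto
        then obtain i where ij: "i < D" "j < D" "A $$ (i,j) \<noteq> 0" unfolding ncols_def by auto
        define a where "a = Re (A $$ (j,j))"
        have a: "0 < a" unfolding a_def using diag_pos[OF psd ij] .
        have "A $$ (j,j) = cnj (A $$ (j,j))" using h ij unfolding herm_def by blast
        hence "Im (A $$ (j,j)) = 0" by (metis Reals_cnj_iff complex_is_Real_iff)
        hence Ajj: "A $$ (j,j) = of_real a" unfolding a_def by (simp add: complex_eq_iff)
        define c where "c = (\<lambda>k. A $$ (k,j))"
        define R where "R = mat D D (\<lambda>(k,l). c k * cnj (c l))"
        have R: "R \<in> carrier_mat D D" unfolding R_def by simp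
        define A' where "A' = A - of_real (1/a) \<cdot>\<^sub>m R"
        have A': "A' \<in> carrier_mat D D" unfolding A'_def using R by simp
        have hR: "herm D R" unfolding herm_def R_def by simp
        have hA': "herm D A'" unfolding A'_def using A R h hR by (intro herm_minus herm_smult) auto
        have cnj_c: "cnj (c l) = A $$ (j,l)" if "l < D" for l
          unfolding c_def using h that ij unfolding herm_def by (metis complex_cnj_cnj)
        define g where "g = (\<lambda>x. \<Sum>l<D. cnj (c l) * x l)"
        have FR: "F D R x x = cnj (g x) * g x" for x
        proof -
          have "F D R x x = (\<Sum>k<D. \<Sum>l<D. (cnj (x k) * c k) * (cnj (c l) * x l))"
            unfolding F_def R_def by (intro sum.cong refl) (simp add: algebra_simps)
          also have "\<dots> = (\<Sum>k<D. cnj (x k) * c k) * g x"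
            unfolding g_def by (simp add: sum_distrib_left sum_distrib_right) (rule sum.swap)
          also have "(\<Sum>k<D. cnj (x k) * c k) = cnj (g x)" unfolding g_def by (simp add: mult.commute)
          finally show ?thesis .
        qed
        have Fe: "F D A (\<lambda>k. if k = j then 1 else 0) x = g x" for x
        proof -
          have "F D A (\<lambda>k. if k = j then 1 else 0) x = (\<Sum>l<D. A $$ (j,l) * x l)"
            unfolding F_def using ij
            by (simp add: if_distrib[of cnj] if_distrib[of "\<lambda>t. t * _"] sum_if_eq cong: if_cong)
          also have "\<dots> = g x" unfolding g_def using cnj_c by (intro sum.cong refl) simp
          finally show ?thesis .
        qed
        have psdA': "psd_mat D A'"
        proof (rule psdI[OF A' hA'])
          fix x
          have pos: "0 < Re (F D A (\<lambda>k. if k = j then 1 else 0) (\<lambda>k. if k = j then 1 else 0))"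
            using e_vec_F[OF ij(2), of A] Ajj a by simp
          have "(cmod (g x))^2 \<le> a * Re (F D A x x)"
            using CS[OF psd pos, of x] Fe e_vec_F[OF ij(2), of A] Ajj by simp
          hence "(cmod (g x))^2 / a \<le> Re (F D A x x)" using a by (simp add: field_simps)
          moreover have "Re (F D A' x x) = Re (F D A x x) - (cmod (g x))^2 / a"
            unfolding A'_def using A R
            by (simp add: F_minus F_smult FR cnj_sq)
          ultimately show "0 \<le> Re (F D A' x x)" by simp
        qed
        have sub: "ncols D A' \<subseteq> ncols D A - {j}"
        proof
          fix l assume l: "l \<in> ncols D A'"
          then obtain k where kl: "k < D" "l < D" "A' $$ (k,l) \<noteq> 0" unfolding ncols_def by auto
          have A'kl: "A' $$ (k,l) = A $$ (k,l) - of_real (1/a) * (c k * cnj (c l))"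
            unfolding A'_def R_def using A kl by simp
          have "l \<noteq> j"
          proof
            assume "l = j"
            hence "A' $$ (k,l) = A $$ (k,j) - of_real (1/a) * (A $$ (k,j) * of_real a)"
              using A'kl cnj_c[OF ij(2)] Ajj unfolding c_def by simp
            also have "\<dots> = 0" using a by (simp add: field_simps)
            finally show False using kl by simp
          qed
          moreover have "l \<in> ncols D A"
          proof (rule ccontr)
            assume "l \<notin> ncols D A"
            hence z: "\<forall>i<D. A $$ (i,l) = 0" using kl unfolding ncols_def by auto
            have "cnj (c l) = 0" using cnj_c[OF kl(2)] z ij by simp
            hence "A' $$ (k,l) = 0" using A'kl z kl by simp
            thus False using kl by simp
          qed
          ultimately show "l \<in> ncols D A - {j}" by simp
        qed
        have fin: "finite (ncols D A)" unfolding ncols_def by simp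
        have "card (ncols D A') \<le> card (ncols D A - {j})" using sub fin by (intro card_mono) auto
        also have "\<dots> < card (ncols D A)" using fin j by (rule card_Diff1_less)
        finally have "card (ncols D A') < n" using cn by simp
        hence psdPA': "psd_mat D (\<phi> A')" using less.IH psdA' by blast
        have psdPR: "psd_mat D (\<phi> R)" unfolding R_def using pos_rank1[OF s ij(2)] .
        have "A = A' + of_real (1/a) \<cdot>\<^sub>m R" unfolding A'_def using A R by (intro eq_matI) auto
        hence "\<phi> A = \<phi> A' + of_real (1/a) \<cdot>\<^sub>m \<phi> R"
          using schwarz_add[OF s A'] schwarz_smult[OF s R] R by simp
        moreover have "psd_mat D (of_real (1/a) \<cdot>\<^sub>m \<phi> R)" by (rule psd_smult[OF _ psdPR]) (use a in simp)
        ultimately show ?thesis using psd_add[OF psdPA'] by simp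
      qed
    qed
  qed
  thus ?thesis using psd by blast
qed



lemma schwarz_mono: assumes s: "schwarz_map D \<phi>" and l: "leq D A B"
  shows "leq D (\<phi> A) (\<phi> B)"
proof -
  have A: "A \<in> carrier_mat D D" and B: "B \<in> carrier_mat D D" using leq_carrier[OF l] by auto
  have "psd_mat D (\<phi> (B - A))" using positive[OF s] l unfolding leq_def by auto
  thus ?thesis unfolding leq_def using schwarz_minus[OF s B A] schwarz_closed[OF s A] schwarz_closed[OF s B] by simp
qed

lemma loewner_leq: "X \<in> carrier_mat D D \<Longrightarrow> Y \<in> carrier_mat D D \<Longrightarrow> loewner_ge D X Y \<longleftrightarrow> leq D Y X"
  unfolding loewner_ge_def leq_def by auto

lemma schwarz_comp: assumes s1: "schwarz_map D \<phi>" and s2: "schwarz_map D \<psi>"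
  shows "schwarz_map D (\<phi> \<circ> \<psi>)"
  unfolding schwarz_map_def
proof (intro conjI ballI)
  show "linear_on_Mat D (\<phi> \<circ> \<psi>)"
    unfolding linear_on_Mat_def
    using schwarz_closed[OF s1] schwarz_closed[OF s2] schwarz_add[OF s1] schwarz_add[OF s2]
      schwarz_smult[OF s1] schwarz_smult[OF s2] by auto
  fix a :: "complex mat" assume a: "a \<in> carrier_mat D D"
  have pa: "\<psi> a \<in> carrier_mat D D" using schwarz_closed[OF s2 a] .
  have aa: "mat_adjoint a * a \<in> carrier_mat D D" using a by (metis adj_carrier mult_carrier_mat)
  have l1: "leq D (\<phi> (mat_adjoint (\<psi> a) * \<psi> a)) (\<phi> (\<psi> (mat_adjoint a * a)))"
    using schwarz_mono[OF s1 schwarz_ineq[OF s2 a]] .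
  have l2: "leq D (mat_adjoint (\<phi> (\<psi> a)) * \<phi> (\<psi> a)) (\<phi> (mat_adjoint (\<psi> a) * \<psi> a))"
    using schwarz_ineq[OF s1 pa] .
  have "leq D (mat_adjoint ((\<phi> \<circ> \<psi>) a) * (\<phi> \<circ> \<psi>) a) ((\<phi> \<circ> \<psi>) (mat_adjoint a * a))"
    using leq_trans[OF l2 l1] by simp
  thus "loewner_ge D ((\<phi> \<circ> \<psi>) (mat_adjoint a * a)) (mat_adjoint ((\<phi> \<circ> \<psi>) a) * (\<phi> \<circ> \<psi>) a)"
    using loewner_leq leq_carrier by blast
qed

lemma schwarz_id: "schwarz_map D (\<lambda>a. a)"
  unfolding schwarz_map_def linear_on_Mat_def
proof (intro conjI ballI allI)
  fix a :: "complex mat" assume a: "a \<in> carrier_mat D D"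
  have aa: "mat_adjoint a * a \<in> carrier_mat D D" using a by (metis adj_carrier mult_carrier_mat)
  show "loewner_ge D (mat_adjoint a * a) (mat_adjoint a * a)"
    using loewner_leq[OF aa aa] leq_refl[OF aa] by simp
qed auto

lemma schwarz_funpow: assumes s: "schwarz_map D \<phi>" shows "schwarz_map D (\<phi> ^^ k)"
proof (induction k)
  case 0 thus ?case using schwarz_id by simp
next
  case (Suc k) thus ?case using schwarz_comp[OF s Suc] by (simp only: funpow.simps)
qed

lemma funpow_eig: assumes s: "schwarz_map D \<phi>" and X: "X \<in> carrier_mat D D" and e: "\<phi> X = l \<cdot>\<^sub>m X"
  shows "(\<phi> ^^ k) X = (l ^ k) \<cdot>\<^sub>m X"
proof (induction k)
  case 0 thus ?case using X by (intro eq_matI) auto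
next
  case (Suc k)
  have "(\<phi> ^^ Suc k) X = \<phi> ((l ^ k) \<cdot>\<^sub>m X)" using Suc by simp
  also have "\<dots> = (l ^ k) \<cdot>\<^sub>m (l \<cdot>\<^sub>m X)" using schwarz_smult[OF s X] e by simp
  also have "\<dots> = (l ^ Suc k) \<cdot>\<^sub>m X" using X by (intro eq_matI) auto
  finally show ?case .
qed

lemma mv_e: "j < D \<Longrightarrow> mv D X (\<lambda>i. if i = j then 1 else 0) k = X $$ (k,j)"
  unfolding mv_def by (simp add: if_distrib[of "\<lambda>t. _ * t"] cong: if_cong)

lemma adj_smult: "X \<in> carrier_mat D D \<Longrightarrow> mat_adjoint (c \<cdot>\<^sub>m X) = cnj c \<cdot>\<^sub>m mat_adjoint X"
  by (intro eq_matI) auto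

lemma eig_bound: assumes s: "schwarz_map D \<phi>" and c: "0 < c"
  and l1: "leq D (\<phi> (1\<^sub>m D)) (of_real c \<cdot>\<^sub>m 1\<^sub>m D)"
  and X: "X \<in> carrier_mat D D" and Xnz: "X \<noteq> 0\<^sub>m D D" and e: "\<phi> X = \<mu> \<cdot>\<^sub>m X"
  shows "(cmod \<mu>)^2 \<le> c"
proof -
  define Y where "Y = mat_adjoint X * X"
  have Y: "Y \<in> carrier_mat D D" unfolding Y_def using X by (metis adj_carrier mult_carrier_mat)
  define r where "r = (cmod \<mu>)^2"
  have r0: "0 \<le> r" unfolding r_def by simp
  have sk: "schwarz_map D (\<phi> ^^ k)" for k using schwarz_funpow[OF s] .
  have "mat_adjoint (\<phi> X) * \<phi> X = of_real r \<cdot>\<^sub>m Y"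
  proof -
    have "mat_adjoint (\<phi> X) * \<phi> X = (cnj \<mu> \<cdot>\<^sub>m mat_adjoint X) * (\<mu> \<cdot>\<^sub>m X)" using e adj_smult[OF X] by simp
    also have "\<dots> = cnj \<mu> \<cdot>\<^sub>m (mat_adjoint X * (\<mu> \<cdot>\<^sub>m X))"
      using X by (intro mult_smult_assoc_mat) auto
    also have "mat_adjoint X * (\<mu> \<cdot>\<^sub>m X) = \<mu> \<cdot>\<^sub>m (mat_adjoint X * X)"
      using X by (intro mult_smult_distrib) auto
    also have "cnj \<mu> \<cdot>\<^sub>m (\<mu> \<cdot>\<^sub>m (mat_adjoint X * X)) = (cnj \<mu> * \<mu>) \<cdot>\<^sub>m (mat_adjoint X * X)"
      using X by (intro eq_matI) auto
    finally show ?thesis unfolding Y_def r_def by (simp add: cnj_sq)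
  qed
  hence lY: "leq D (of_real r \<cdot>\<^sub>m Y) (\<phi> Y)" using schwarz_ineq[OF s X] unfolding Y_def by simp
  have i1: "leq D (of_real (r ^ k) \<cdot>\<^sub>m Y) ((\<phi> ^^ k) Y)" for k
  proof (induction k)
    case 0
    have "of_real (r ^ 0) \<cdot>\<^sub>m Y = Y" using Y by (intro eq_matI) auto
    thus ?case using leq_refl[OF Y] by simp
  next
    case (Suc k)
    have a1: "leq D (\<phi> (of_real (r ^ k) \<cdot>\<^sub>m Y)) ((\<phi> ^^ Suc k) Y)"
      using schwarz_mono[OF s Suc] by simp
    have "\<phi> (of_real (r ^ k) \<cdot>\<^sub>m Y) = of_real (r ^ k) \<cdot>\<^sub>m \<phi> Y" using schwarz_smult[OF s Y] .
    moreover have "leq D (of_real (r ^ k) \<cdot>\<^sub>m (of_real r \<cdot>\<^sub>m Y)) (of_real (r ^ k) \<cdot>\<^sub>m \<phi> Y)"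
      using leq_smult[of "r ^ k", OF _ lY] r0 by simp
    moreover have "of_real (r ^ k) \<cdot>\<^sub>m (of_real r \<cdot>\<^sub>m Y) = of_real (r ^ Suc k) \<cdot>\<^sub>m Y"
      using Y by (intro eq_matI) (auto simp: algebra_simps)
    ultimately show ?case using leq_trans a1 by metis
  qed
  have i2: "leq D ((\<phi> ^^ k) (1\<^sub>m D)) (of_real (c ^ k) \<cdot>\<^sub>m 1\<^sub>m D)" for k
  proof (induction k)
    case 0
    have "of_real (c ^ 0) \<cdot>\<^sub>m 1\<^sub>m D = (1\<^sub>m D :: complex mat)" by (intro eq_matI) auto
    thus ?case using leq_refl[of "1\<^sub>m D" D] by simp
  next
    case (Suc k)
    have a1: "leq D ((\<phi> ^^ Suc k) (1\<^sub>m D)) (\<phi> (of_real (c ^ k) \<cdot>\<^sub>m 1\<^sub>m D))"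
      using schwarz_mono[OF s Suc] by simp
    have "\<phi> (of_real (c ^ k) \<cdot>\<^sub>m 1\<^sub>m D) = of_real (c ^ k) \<cdot>\<^sub>m \<phi> (1\<^sub>m D)" using schwarz_smult[OF s] by simp
    moreover have "leq D (of_real (c ^ k) \<cdot>\<^sub>m \<phi> (1\<^sub>m D)) (of_real (c ^ k) \<cdot>\<^sub>m (of_real c \<cdot>\<^sub>m 1\<^sub>m D))"
      using leq_smult[of "c ^ k", OF _ l1] c by simp
    moreover have "of_real (c ^ k) \<cdot>\<^sub>m (of_real c \<cdot>\<^sub>m 1\<^sub>m D) = (of_real (c ^ Suc k) \<cdot>\<^sub>m 1\<^sub>m D :: complex mat)"
      by (intro eq_matI) (auto simp: algebra_simps)
    ultimately show ?case using leq_trans a1 by metis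
  qed
  define t where "t = T D Y"
  have t0: "0 \<le> t" unfolding t_def T_def by (auto intro!: sum_nonneg)
  have lt: "leq D Y (of_real t \<cdot>\<^sub>m 1\<^sub>m D)" unfolding t_def
    using herm_bound[OF Y] herm_adj_mult[OF X] unfolding Y_def by simp
  have i3: "leq D ((\<phi> ^^ k) Y) (of_real (t * c ^ k) \<cdot>\<^sub>m 1\<^sub>m D)" for k
  proof -
    have "leq D ((\<phi> ^^ k) Y) ((\<phi> ^^ k) (of_real t \<cdot>\<^sub>m 1\<^sub>m D))" using schwarz_mono[OF sk lt] .
    moreover have "(\<phi> ^^ k) (of_real t \<cdot>\<^sub>m 1\<^sub>m D) = of_real t \<cdot>\<^sub>m (\<phi> ^^ k) (1\<^sub>m D)"
      using schwarz_smult[OF sk] by simp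
    moreover have "leq D (of_real t \<cdot>\<^sub>m (\<phi> ^^ k) (1\<^sub>m D)) (of_real t \<cdot>\<^sub>m (of_real (c ^ k) \<cdot>\<^sub>m 1\<^sub>m D))"
      using leq_smult[OF t0 i2] .
    moreover have "of_real t \<cdot>\<^sub>m (of_real (c ^ k) \<cdot>\<^sub>m 1\<^sub>m D) = (of_real (t * c ^ k) \<cdot>\<^sub>m 1\<^sub>m D :: complex mat)"
      by (intro eq_matI) (auto simp: algebra_simps)
    ultimately show ?thesis using leq_trans by metis
  qed
  obtain i j where ij: "i < D" "j < D" "X $$ (i,j) \<noteq> 0"
  proof -
    have "\<exists>i j. i < D \<and> j < D \<and> X $$ (i,j) \<noteq> 0"
    proof (rule ccontr)
      assume "\<not> ?thesis"
      hence "X = 0\<^sub>m D D" using X by (intro eq_matI) auto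
      thus False using Xnz by simp
    qed
    thus ?thesis using that by blast
  qed
  define x where "x = (\<lambda>k. if k = j then 1 else (0::complex))"
  have Nx: "N D x = 1" unfolding N_def x_def using ij
    by (simp add: if_distrib[of cmod] if_distrib[of "\<lambda>t. t^2"] cong: if_cong)
  define y where "y = Re (F D Y x x)"
  have y: "0 < y"
  proof -
    have "y = N D (mv D X x)" unfolding y_def Y_def using F_adj_mult[OF X] by simp
    also have "N D (mv D X x) = (\<Sum>k<D. (cmod (X $$ (k,j)))^2)" unfolding N_def x_def using mv_e[OF ij(2)] by simp
    also have "\<dots> > 0"
    proof -
      have "(cmod (X $$ (i,j)))^2 \<le> (\<Sum>k<D. (cmod (X $$ (k,j)))^2)"
        by (rule member_le_sum[where f = "\<lambda>k. (cmod (X $$ (k,j)))^2"]) (use ij in auto)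
      moreover have "0 < (cmod (X $$ (i,j)))^2" using ij by simp
      ultimately show ?thesis by linarith
    qed
    finally show ?thesis .
  qed
  have ineq: "r ^ k * y \<le> t * c ^ k" for k
  proof -
    have "Re (F D (of_real (r ^ k) \<cdot>\<^sub>m Y) x x) \<le> Re (F D (of_real (t * c ^ k) \<cdot>\<^sub>m 1\<^sub>m D) x x)"
      using leq_F[OF leq_trans[OF i1 i3]] .
    thus ?thesis using Y Nx unfolding y_def by (simp add: F_smult F_one)
  qed
  show ?thesis unfolding r_def[symmetric]
  proof (rule ccontr)
    assume "\<not> r \<le> c"
    hence rc: "1 < r / c" using c by simp
    obtain k where k: "t / y < (r / c) ^ k" using real_arch_pow[OF rc] by blast
    have "(r / c) ^ k * y \<le> t" using ineq[of k] c by (simp add: power_divide field_simps)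
    hence "(r / c) ^ k \<le> t / y" using y by (simp add: field_simps)
    thus False using k by simp
  qed
qed



lemma idx1: fixes D :: nat assumes "i < D" "j < D"
  shows "(i * D + j) div D = i" "(i * D + j) mod D = j" "i * D + j < D * D"
proof -
  show "(i * D + j) div D = i" using assms by simp
  show "(i * D + j) mod D = j" using assms by simp
  have "i * D + j < i * D + D" using assms by simp
  also have "\<dots> = (i + 1) * D" by simp
  also have "\<dots> \<le> D * D" using assms(1) by (intro mult_right_mono) auto
  finally show "i * D + j < D * D" .
qed

lemma idx2: fixes D :: nat assumes "p < D * D"
  shows "p div D < D" "p mod D < D" "(p div D) * D + p mod D = p"
proof -
  have D0: "0 < D" using assms by (cases D) auto
  show "p div D < D" using assms by (simp add: less_mult_imp_div_less)
  show "p mod D < D" using D0 by simp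
  show "(p div D) * D + p mod D = p" by simp
qed

definition Eu :: "nat \<Rightarrow> nat \<Rightarrow> complex mat" where
  "Eu D q = mat D D (\<lambda>(i,j). if i = q div D \<and> j = q mod D then 1 else 0)"

definition Mp :: "nat \<Rightarrow> complex vec \<Rightarrow> nat \<Rightarrow> complex mat" where
  "Mp D v n = mat D D (\<lambda>(i,j). if i * D + j < n then v $ (i * D + j) else 0)"

lemma Mp_Suc: assumes "n < D * D"
  shows "Mp D v (Suc n) = Mp D v n + (v $ n) \<cdot>\<^sub>m Eu D n"
proof (rule eq_matI)
  fix i j assume ij: "i < dim_row (Mp D v n + (v $ n) \<cdot>\<^sub>m Eu D n)" "j < dim_col (Mp D v n + (v $ n) \<cdot>\<^sub>m Eu D n)"
  hence ij: "i < D" "j < D" unfolding Mp_def Eu_def by auto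
  have e: "(i * D + j = n) = (i = n div D \<and> j = n mod D)"
    using idx1[OF ij] idx2[OF assms] by metis
  show "Mp D v (Suc n) $$ (i, j) = (Mp D v n + (v $ n) \<cdot>\<^sub>m Eu D n) $$ (i, j)"
    using ij e unfolding Mp_def Eu_def by auto
qed (auto simp: Mp_def Eu_def)

lemma phi_Mp: assumes s: "schwarz_map D \<phi>" and n: "n \<le> D * D" and ij: "i < D" "j < D"
  shows "\<phi> (Mp D v n) $$ (i,j) = (\<Sum>q<n. v $ q * \<phi> (Eu D q) $$ (i,j))"
  using n
proof (induction n)
  case 0
  have "Mp D v 0 = 0\<^sub>m D D" unfolding Mp_def by (intro eq_matI) auto
  thus ?case using schwarz_zero[OF s] ij by simp
next
  case (Suc n)
  have n: "n < D * D" using Suc by simp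
  have M: "Mp D v n \<in> carrier_mat D D" and E: "Eu D n \<in> carrier_mat D D" unfolding Mp_def Eu_def by auto
  have "\<phi> (Mp D v (Suc n)) = \<phi> (Mp D v n) + (v $ n) \<cdot>\<^sub>m \<phi> (Eu D n)"
    using Mp_Suc[OF n] schwarz_add[OF s M] schwarz_smult[OF s E] E by simp
  thus ?case using Suc ij schwarz_closed[OF s M] schwarz_closed[OF s E] by simp
qed

lemma eig_exists: assumes s: "schwarz_map D \<phi>" and D: "D \<ge> 1"
  shows "\<exists>l. map_eigenvalue D \<phi> l"
proof -
  define R where "R = mat (D*D) (D*D) (\<lambda>(p,q). \<phi> (Eu D q) $$ (p div D, p mod D))"
  have R: "R \<in> carrier_mat (D*D) (D*D)" unfolding R_def by simp
  have "0 < D * D" using D by simp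
  from spectrum_non_empty[OF R this] obtain k where "k \<in> spectrum R" by auto
  hence "eigenvalue R k" unfolding spectrum_def by simp
  then obtain v where ev: "eigenvector R v k" unfolding eigenvalue_def by auto
  hence v: "v \<in> carrier_vec (D*D)" "v \<noteq> 0\<^sub>v (D*D)" "R *\<^sub>v v = k \<cdot>\<^sub>v v"
    unfolding eigenvector_def using R by auto
  define X where "X = Mp D v (D*D)"
  have X: "X \<in> carrier_mat D D" unfolding X_def Mp_def by simp
  have Xij: "X $$ (i,j) = v $ (i * D + j)" if "i < D" "j < D" for i j
    unfolding X_def Mp_def using that idx1[OF that] by simp
  have "X \<noteq> 0\<^sub>m D D"
  proof
    assume X0: "X = 0\<^sub>m D D"
    have "v = 0\<^sub>v (D*D)"
    proof (rule eq_vecI)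
      fix p assume "p < dim_vec (0\<^sub>v (D*D) :: complex vec)"
      hence p: "p < D * D" by simp
      have "v $ p = X $$ (p div D, p mod D)" using Xij[OF idx2(1,2)[OF p]] idx2(3)[OF p] by simp
      thus "v $ p = 0\<^sub>v (D*D) $ p" using X0 idx2(1,2)[OF p] p by simp
    qed (use v in auto)
    thus False using v by simp
  qed
  moreover have "\<phi> X = k \<cdot>\<^sub>m X"
  proof (rule eq_matI)
    fix i j assume "i < dim_row (k \<cdot>\<^sub>m X)" "j < dim_col (k \<cdot>\<^sub>m X)"
    hence ij: "i < D" "j < D" using X by auto
    have p: "i * D + j < D * D" using idx1[OF ij] by simp
    have "\<phi> X $$ (i,j) = (\<Sum>q<D*D. v $ q * \<phi> (Eu D q) $$ (i,j))"
      unfolding X_def using phi_Mp[OF s _ ij] by simp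
    also have "\<dots> = (R *\<^sub>v v) $ (i * D + j)"
      using p v(1) idx1[OF ij] unfolding R_def
      by (simp add: scalar_prod_def lessThan_atLeast0 mult.commute)
    also have "\<dots> = k * v $ (i * D + j)" using v p by simp
    also have "\<dots> = (k \<cdot>\<^sub>m X) $$ (i,j)" using Xij[OF ij] ij X by simp
    finally show "\<phi> X $$ (i,j) = (k \<cdot>\<^sub>m X) $$ (i,j)" .
  qed (use X schwarz_closed[OF s X] in auto)
  ultimately show ?thesis unfolding map_eigenvalue_def using X by blast
qed



lemma N_diff: "N D (\<lambda>i. x i - u i) = N D x - 2 * Re (\<Sum>i<D. cnj (x i) * u i) + N D u"
proof -
  have t: "(cmod (a - b))^2 = (cmod a)^2 - 2 * Re (cnj a * b) + (cmod b)^2" for a b :: complex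
    using cmod_power2[of "a - b"] cmod_power2[of a] cmod_power2[of b] by (simp add: power2_eq_square algebra_simps)
  have "N D (\<lambda>i. x i - u i) = (\<Sum>i<D. (cmod (x i))^2 - 2 * Re (cnj (x i) * u i) + (cmod (u i))^2)"
    unfolding N_def by (intro sum.cong refl) (rule t)
  also have "\<dots> = N D x - 2 * Re (\<Sum>i<D. cnj (x i) * u i) + N D u"
    unfolding N_def by (simp add: sum.distrib sum_subtractf Re_sum sum_distrib_left)
  finally show ?thesis .
qed

lemma adj_one: "mat_adjoint (1\<^sub>m D) = (1\<^sub>m D :: complex mat)"
  by (intro eq_matI) auto

lemma P_le_one: assumes s: "schwarz_map D \<phi>" shows "leq D (\<phi> (1\<^sub>m D)) (1\<^sub>m D)"
proof -
  define P where "P = \<phi> (1\<^sub>m D)"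
  have P: "P \<in> carrier_mat D D" unfolding P_def using schwarz_closed[OF s] by simp
  have hP: "herm D P" unfolding P_def using psd_herm[OF positive[OF s psd_one]] .
  have l: "leq D (mat_adjoint P * P) P"
    using schwarz_ineq[OF s, of "1\<^sub>m D"] adj_one[of D] unfolding P_def by simp
  show ?thesis unfolding P_def[symmetric]
  proof (rule leqI[OF P _ hP herm_one])
    fix x
    define u where "u = mv D P x"
    have z: "F D P x x = (\<Sum>i<D. cnj (x i) * u i)" unfolding u_def F_mv ..
    have "N D u \<le> Re (F D P x x)" using leq_F[OF l, of x] F_adj_mult[OF P] unfolding u_def by simp
    moreover have "0 \<le> N D (\<lambda>i. x i - u i)" by (rule N_nonneg)
    ultimately show "Re (F D P x x) \<le> Re (F D (1\<^sub>m D) x x)"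
      unfolding N_diff F_one z by simp
  qed simp
qed

lemma funpow_one_le: assumes s: "schwarz_map D \<phi>" shows "leq D ((\<phi> ^^ k) (1\<^sub>m D)) (1\<^sub>m D)"
proof (induction k)
  case 0 thus ?case using leq_refl[of "1\<^sub>m D" D] by simp
next
  case (Suc k)
  have "leq D ((\<phi> ^^ Suc k) (1\<^sub>m D)) (\<phi> (1\<^sub>m D))" using schwarz_mono[OF s Suc] by simp
  thus ?case using leq_trans P_le_one[OF s] by blast
qed

lemma smult_one_leq: "e' \<le> e \<Longrightarrow> leq D (of_real e' \<cdot>\<^sub>m 1\<^sub>m D) (of_real e \<cdot>\<^sub>m 1\<^sub>m D)"
proof (rule leqI)
  fix x assume "e' \<le> e"
  thus "Re (F D (of_real e' \<cdot>\<^sub>m 1\<^sub>m D) x x) \<le> Re (F D (of_real e \<cdot>\<^sub>m 1\<^sub>m D) x x)"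
    using N_nonneg[of D x] by (simp add: F_smult F_one mult_right_mono)
qed (auto intro: herm_smult herm_one)

theorem proposition2p3:
  fixes D :: nat and \<phi> :: "complex mat \<Rightarrow> complex mat"
  assumes "D \<ge> 1"
    and "schwarz_map D \<phi>"
    and "primitive_map D \<phi>"
  shows "map_spectral_radius D \<phi> = 1 \<longleftrightarrow> \<phi> (1\<^sub>m D) = 1\<^sub>m D"
proof -
  note D = assms(1) and s = assms(2) and prim = assms(3)
  define S where "S = {cmod l | l. map_eigenvalue D \<phi> l}"
  have rad: "map_spectral_radius D \<phi> = Sup S" unfolding map_spectral_radius_def S_def ..
  have one_nz: "1\<^sub>m D \<noteq> (0\<^sub>m D D :: complex mat)"
  proof
    assume "1\<^sub>m D = (0\<^sub>m D D :: complex mat)"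
    hence "(1\<^sub>m D :: complex mat) $$ (0,0) = 0\<^sub>m D D $$ (0,0)" by simp
    thus False using D by simp
  qed
  show ?thesis
  proof
    assume unital: "\<phi> (1\<^sub>m D) = 1\<^sub>m D"
    have "1 \<in> S"
    proof -
      have o: "(1 \<cdot>\<^sub>m 1\<^sub>m D :: complex mat) = 1\<^sub>m D" by (intro eq_matI) auto
      have "\<phi> (1\<^sub>m D) = 1 \<cdot>\<^sub>m 1\<^sub>m D" unfolding o by (rule unital)
      hence "map_eigenvalue D \<phi> 1" unfolding map_eigenvalue_def using one_nz
        by (intro bexI[of _ "1\<^sub>m D"]) auto
      hence "cmod 1 \<in> S" unfolding S_def by blast
      thus ?thesis by simp
    qed
    moreover have "x \<le> 1" if "x \<in> S" for x
    proof -
      obtain l X where x: "x = cmod l" and X: "X \<in> carrier_mat D D" "X \<noteq> 0\<^sub>m D D" "\<phi> X = l \<cdot>\<^sub>m X"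
        using \<open>x \<in> S\<close> unfolding S_def map_eigenvalue_def by blast
      have "of_real 1 \<cdot>\<^sub>m 1\<^sub>m D = (1\<^sub>m D :: complex mat)" by (intro eq_matI) auto
      hence "leq D (\<phi> (1\<^sub>m D)) (of_real 1 \<cdot>\<^sub>m 1\<^sub>m D)" using unital leq_refl[of "1\<^sub>m D" D] by simp
      from eig_bound[OF s _ this X] have "(cmod l)^2 \<le> 1" by simp
      thus "x \<le> 1" unfolding x by (simp add: power_le_one_iff abs_square_le_1)
    qed
    ultimately show "map_spectral_radius D \<phi> = 1" unfolding rad by (rule cSup_eq_maximum)
  next
    assume r1: "map_spectral_radius D \<phi> = 1"
    show "\<phi> (1\<^sub>m D) = 1\<^sub>m D"
    proof (rule ccontr)
      assume nu: "\<phi> (1\<^sub>m D) \<noteq> 1\<^sub>m D"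
      define P where "P = \<phi> (1\<^sub>m D)"
      have P: "P \<in> carrier_mat D D" unfolding P_def using schwarz_closed[OF s] by simp
      define Z where "Z = 1\<^sub>m D - P"
      have Z: "Z \<in> carrier_mat D D" unfolding Z_def using P by simp
      have psdZ: "psd_mat D Z" using P_le_one[OF s] unfolding leq_def Z_def P_def by simp
      have PZ: "P = 1\<^sub>m D - Z" unfolding Z_def using P by (intro eq_matI) auto
      have Znz: "Z \<noteq> 0\<^sub>m D D"
      proof
        assume Z0: "Z = 0\<^sub>m D D"
        have "P = 1\<^sub>m D - 0\<^sub>m D D" using PZ Z0 by simp
        also have "\<dots> = 1\<^sub>m D" by (intro eq_matI) auto
        finally show False using nu unfolding P_def by simp
      qed
      obtain n where n: "\<And>A. psd_mat D A \<and> A \<noteq> 0\<^sub>m D D \<Longrightarrow> pd_mat D ((\<phi> ^^ n) A)"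
        using prim unfolding primitive_map_def by blast
      define Q where "Q = (\<phi> ^^ n) Z"
      have pdQ: "pd_mat D Q" unfolding Q_def using n psdZ Znz by blast
      obtain e where e: "0 < e" "leq D (of_real e \<cdot>\<^sub>m 1\<^sub>m D) Q" using pd_eps[OF pdQ] by blast
      define e' where "e' = min e (1/2)"
      have e': "0 < e'" "e' \<le> e" "e' < 1" unfolding e'_def using e by auto
      have lQ: "leq D (of_real e' \<cdot>\<^sub>m 1\<^sub>m D) Q" using leq_trans[OF smult_one_leq[OF e'(2)] e(2)] .
      have sn: "schwarz_map D (\<phi> ^^ n)" using schwarz_funpow[OF s] .
      define \<psi> where "\<psi> = \<phi> ^^ Suc n"
      have spsi: "schwarz_map D \<psi>" unfolding \<psi>_def using schwarz_funpow[OF s] .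
      have psi1: "\<psi> (1\<^sub>m D) = (\<phi> ^^ n) P" unfolding \<psi>_def P_def funpow_Suc_right by simp
      have Qe: "Q = (\<phi> ^^ n) (1\<^sub>m D) - (\<phi> ^^ n) P" unfolding Q_def Z_def using schwarz_minus[OF sn _ P] by simp
      have c1: "(\<phi> ^^ n) (1\<^sub>m D) \<in> carrier_mat D D" using schwarz_closed[OF sn] by simp
      have c2: "(\<phi> ^^ n) P \<in> carrier_mat D D" using schwarz_closed[OF sn P] .
      have psiQ: "\<psi> (1\<^sub>m D) = (\<phi> ^^ n) (1\<^sub>m D) - Q" unfolding psi1 Qe using c1 c2 by (intro eq_matI) auto
      have Q: "Q \<in> carrier_mat D D" using leq_carrier(2)[OF lQ] .
      have lpsi: "leq D (\<psi> (1\<^sub>m D)) (of_real (1 - e') \<cdot>\<^sub>m 1\<^sub>m D)"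
      proof (rule leqI)
        show "\<psi> (1\<^sub>m D) \<in> carrier_mat D D" using schwarz_closed[OF spsi] by simp
        show "herm D (\<psi> (1\<^sub>m D))" using psd_herm[OF positive[OF spsi psd_one]] .
        show "herm D (of_real (1 - e') \<cdot>\<^sub>m 1\<^sub>m D)" by (rule herm_smult[OF one_carrier_mat herm_one])
        fix x
        have "Re (F D (\<psi> (1\<^sub>m D)) x x) = Re (F D ((\<phi> ^^ n) (1\<^sub>m D)) x x) - Re (F D Q x x)"
          unfolding psiQ using c1 Q by (simp add: F_minus)
        also have "\<dots> \<le> N D x - e' * N D x"
          using leq_F[OF funpow_one_le[OF s, of n], of x] leq_F[OF lQ, of x]
          by (simp add: F_smult F_one)
        also have "\<dots> = Re (F D (of_real (1 - e') \<cdot>\<^sub>m 1\<^sub>m D) x x)"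
          by (simp add: F_smult F_one algebra_simps)
        finally show "Re (F D (\<psi> (1\<^sub>m D)) x x) \<le> Re (F D (of_real (1 - e') \<cdot>\<^sub>m 1\<^sub>m D) x x)" .
      qed simp
      define m where "m = 2 * Suc n"
      have m: "0 < m" unfolding m_def by simp
      define \<rho> where "\<rho> = root m (1 - e')"
      have \<rho>1: "\<rho> < 1" unfolding \<rho>_def using real_root_lt_1_iff[OF m] e' by simp
      have \<rho>0: "0 \<le> \<rho>" unfolding \<rho>_def using e' by (intro real_root_ge_zero) simp
      have \<rho>m: "\<rho> ^ m = 1 - e'" unfolding \<rho>_def using real_root_pow_pos2[OF m] e' by simp
      have bnd: "x \<le> \<rho>" if "x \<in> S" for x
      proof -
        obtain l X where x: "x = cmod l" and X: "X \<in> carrier_mat D D" "X \<noteq> 0\<^sub>m D D" "\<phi> X = l \<cdot>\<^sub>m X"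
          using \<open>x \<in> S\<close> unfolding S_def map_eigenvalue_def by blast
        have "\<psi> X = (l ^ Suc n) \<cdot>\<^sub>m X" unfolding \<psi>_def using funpow_eig[OF s X(1) X(3)] .
        from eig_bound[OF spsi _ lpsi X(1,2) this] e' have "(cmod (l ^ Suc n))^2 \<le> 1 - e'" by simp
        moreover have "x ^ m = (cmod (l ^ Suc n))^2" unfolding x m_def
          by (simp only: norm_power mult.commute[of 2] power_mult)
        ultimately have xm: "x ^ m \<le> 1 - e'" by simp
        show "x \<le> \<rho>"
        proof (rule ccontr)
          assume "\<not> x \<le> \<rho>"
          hence "\<rho> < x" by simp
          hence "\<rho> ^ m < x ^ m" using \<rho>0 m by (intro power_strict_mono) auto
          thus False using xm \<rho>m by simp
        qed
      qed
      have "S \<noteq> {}" using eig_exists[OF s D] unfolding S_def by auto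
      hence "Sup S \<le> \<rho>" using bnd by (rule cSup_least)
      thus False using r1 rad \<rho>1 by simp
    qed
  qed
qed

end
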